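(* If the extended Markov monoid of a probabilistic automaton $\mathcal{A}$ contains a leak witness, then the Markov monoid of $\mathcal{A}$ contains a non-simplicity witness.
   Context: Fix a finite alphabet $A$ and a probabilistic automaton $\mathcal{A}=(Q,q_0,\Delta,F)$, $\Delta:Q\times A\to\mathcal{D}(Q)$. A limit-word is a map $\mathbf{u}:Q\times Q\to\{0,1\}$ such that every $s$ has some $t$ with $\mathbf{u}(s,t)=1$. Concatenation: $(\mathbf{u}\cdot\mathbf{v})(s,t)=1$ iff there is $q$ with $\mathbf{u}(s,q)=\mathbf{v}(q,t)=1$ (written $\mathbf{u}\mathbf{v}$). $\mathbf{u}$ is idempotent if $\mathbf{u}\mathbf{u}=\mathbf{u}$; for idempotent $\mathbf{u}$, $s$ is $\mathbf{u}$-recurrent if for all $t$, $\mathbf{u}(s,t)=1\Rightarrow\mathbf{u}(t,s)=1$, and $\mathbf{u}$-transient otherwise; $\mathbf{u}^\sharp(s,t)=1$ iff $\mathbf{u}(s,t)=1$ and $t$ is $\mathbf{u}$-recurrent. For $a\in A$, $\mathbf{a}(s,t)=1$ iff $\Delta(s,a)(t)>0$; $\mathbf{1}$ is the identity. The Markov monoid of $\mathcal{A}$ is the smallest set of limit-words containing $\{\mathbf{a}\mid a\in A\}\cup\{\mathbf{1}\}$ and closed under concatenation and iteration of idempotents. An extended limit-word is a pair $(\mathbf{u},\mathbf{u}_+)$ of limit-words with $\mathbf{u}\le\mathbf{u}_+$ pointwise; concatenation is componentwise, $(\mathbf{u},\mathbf{u}_+)$ is idempotent if both components are, and then $(\mathbf{u},\mathbf{u}_+)^\sharp=(\mathbf{u}^\sharp,\mathbf{u}_+)$.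 The extended Markov monoid is the smallest set of extended limit-words containing $\{(\mathbf{a},\mathbf{a})\mid a\in A\}\cup\{(\mathbf{1},\mathbf{1})\}$ and closed under concatenation and iteration of idempotents. A leak witness is an idempotent extended limit-word $(\mathbf{u},\mathbf{u}_+)$ with states $r,q$ both $\mathbf{u}$-recurrent such that $\mathbf{u}(r,q)=0$ and $\mathbf{u}_+(r,q)=1$. A non-simplicity witness is a triple $(\mathbf{u},\mathbf{v},\mathbf{w})$ of elements of the Markov monoid, with $\mathbf{v}$ idempotent, for which there exist states $r,t$ such that: $\mathbf{u}\mathbf{v}^\sharp\mathbf{w}$ is idempotent, $r$ is $\mathbf{u}\mathbf{v}^\sharp\mathbf{w}$-recurrent, $(\mathbf{u}\mathbf{v})(r,t)=1$, and $t$ is $\mathbf{v}$-transient. *)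

theory Defs
  imports "HOL-Probability.Probability_Mass_Function"
begin

(* A probabilistic automaton over finite state type 'q and finite alphabet 'a:
   transition function Delta :: 'q => 'a => 'q pmf.  Initial state and final
   states do not influence the (extended) Markov monoid. *)

type_synonym 'q lword = "'q \<Rightarrow> 'q \<Rightarrow> bool"

definition limit_word :: "'q lword \<Rightarrow> bool" where
  "limit_word u \<longleftrightarrow> (\<forall>s. \<exists>t. u s t)"

definition lw_cat :: "'q lword \<Rightarrow> 'q lword \<Rightarrow> 'q lword" where
  "lw_cat u v = (\<lambda>s t. \<exists>q. u s q \<and> v q t)"

definition lw_idem :: "'q lword \<Rightarrow> bool" where
  "lw_idem u \<longleftrightarrow> lw_cat u u = u"

definition lw_recurrent :: "'q lword \<Rightarrow> 'q \<Rightarrow> bool" where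
  "lw_recurrent u s \<longleftrightarrow> (\<forall>t. u s t \<longrightarrow> u t s)"

definition lw_sharp :: "'q lword \<Rightarrow> 'q lword" where
  "lw_sharp u = (\<lambda>s t. u s t \<and> lw_recurrent u t)"

definition lw_letter :: "('q \<Rightarrow> 'a \<Rightarrow> 'q pmf) \<Rightarrow> 'a \<Rightarrow> 'q lword" where
  "lw_letter Delta a = (\<lambda>s t. pmf (Delta s a) t > 0)"

definition lw_one :: "'q lword" where
  "lw_one = (\<lambda>s t. s = t)"

inductive_set markov_monoid :: "('q \<Rightarrow> 'a \<Rightarrow> 'q pmf) \<Rightarrow> 'q lword set"
  for Delta where
  letter: "lw_letter Delta a \<in> markov_monoid Delta"
| one: "lw_one \<in> markov_monoid Delta"
| cat: "u \<in> markov_monoid Delta \<Longrightarrow> v \<in> markov_monoid Delta \<Longrightarrow>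
        lw_cat u v \<in> markov_monoid Delta"
| iter: "u \<in> markov_monoid Delta \<Longrightarrow> lw_idem u \<Longrightarrow>
        lw_sharp u \<in> markov_monoid Delta"

definition elw_cat :: "'q lword \<times> 'q lword \<Rightarrow> 'q lword \<times> 'q lword \<Rightarrow> 'q lword \<times> 'q lword" where
  "elw_cat x y = (lw_cat (fst x) (fst y), lw_cat (snd x) (snd y))"

definition elw_idem :: "'q lword \<times> 'q lword \<Rightarrow> bool" where
  "elw_idem x \<longleftrightarrow> lw_idem (fst x) \<and> lw_idem (snd x)"

definition elw_sharp :: "'q lword \<times> 'q lword \<Rightarrow> 'q lword \<times> 'q lword" where
  "elw_sharp x = (lw_sharp (fst x), snd x)"

inductive_set ext_markov_monoid :: "('q \<Rightarrow> 'a \<Rightarrow> 'q pmf) \<Rightarrow> ('q lword \<times> 'q lword) set"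
  for Delta where
  letter: "(lw_letter Delta a, lw_letter Delta a) \<in> ext_markov_monoid Delta"
| one: "(lw_one, lw_one) \<in> ext_markov_monoid Delta"
| cat: "x \<in> ext_markov_monoid Delta \<Longrightarrow> y \<in> ext_markov_monoid Delta \<Longrightarrow>
        elw_cat x y \<in> ext_markov_monoid Delta"
| iter: "x \<in> ext_markov_monoid Delta \<Longrightarrow> elw_idem x \<Longrightarrow>
        elw_sharp x \<in> ext_markov_monoid Delta"

definition leak_witness :: "'q lword \<times> 'q lword \<Rightarrow> bool" where
  "leak_witness x \<longleftrightarrow> elw_idem x \<and>
     (\<exists>r q. lw_recurrent (fst x) r \<and> lw_recurrent (fst x) q \<and>
            \<not> fst x r q \<and> snd x r q)"

definition non_simplicity_witness :: "'q lword \<Rightarrow> 'q lword \<Rightarrow> 'q lword \<Rightarrow> bool" where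
  "non_simplicity_witness u v w \<longleftrightarrow> lw_idem v \<and>
     (\<exists>r t. lw_idem (lw_cat (lw_cat u (lw_sharp v)) w) \<and>
            lw_recurrent (lw_cat (lw_cat u (lw_sharp v)) w) r \<and>
            lw_cat u v r t \<and> \<not> lw_recurrent v t)"

end

theory Submission
  imports Defs
begin

lemma lw_cat_assoc: "lw_cat (lw_cat u v) w = lw_cat u (lw_cat v w)"
  by (auto simp: lw_cat_def fun_eq_iff)

lemma lw_cat_one_left[simp]: "lw_cat lw_one u = u"
  by (auto simp: lw_cat_def lw_one_def fun_eq_iff)

lemma lw_cat_one_right[simp]: "lw_cat u lw_one = u"
  by (auto simp: lw_cat_def lw_one_def fun_eq_iff)

lemma sharp_absorb: "lw_idem u \<Longrightarrow> lw_cat u (lw_sharp u) = lw_sharp u"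
  unfolding lw_idem_def lw_sharp_def
  by (metis (no_types, lifting) lw_cat_def)

definition cutP where
  "cutP Delta U s \<longleftrightarrow> (\<exists>a v b t'. a \<in> markov_monoid Delta \<and> v \<in> markov_monoid Delta \<and>
      b \<in> markov_monoid Delta \<and> lw_idem v \<and> U = lw_cat (lw_cat a (lw_sharp v)) b \<and>
      lw_cat a v s t' \<and> \<not> lw_recurrent v t')"

lemma main:
  assumes "x \<in> ext_markov_monoid Delta"
  shows "fst x \<in> markov_monoid Delta \<and> (\<forall>s t. snd x s t \<and> \<not> fst x s t \<longrightarrow> cutP Delta (fst x) s)"
  using assms
proof (induction rule: ext_markov_monoid.induct)
  case (letter a)
  then show ?case by (auto intro: markov_monoid.letter)
next
  case one
  then show ?case by (auto intro: markov_monoid.one)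
next
  case (cat x y)
  obtain u1 p1 where x: "x = (u1, p1)" by (cases x)
  obtain u2 p2 where y: "y = (u2, p2)" by (cases y)
  have M1: "u1 \<in> markov_monoid Delta" and M2: "u2 \<in> markov_monoid Delta"
    using cat x y by auto
  have IH1: "\<And>s t. p1 s t \<Longrightarrow> \<not> u1 s t \<Longrightarrow> cutP Delta u1 s" using cat x by auto
  have IH2: "\<And>s t. p2 s t \<Longrightarrow> \<not> u2 s t \<Longrightarrow> cutP Delta u2 s" using cat y by auto
  have "cutP Delta (lw_cat u1 u2) s" if P: "lw_cat p1 p2 s t" "\<not> lw_cat u1 u2 s t" for s t
  proof -
    obtain q where q: "p1 s q" "p2 q t" using P(1) by (auto simp: lw_cat_def)
    show ?thesis
    proof (cases "u1 s q")
      case False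
      then obtain a v b t' where H: "a \<in> markov_monoid Delta" "v \<in> markov_monoid Delta"
        "b \<in> markov_monoid Delta" "lw_idem v" "u1 = lw_cat (lw_cat a (lw_sharp v)) b"
        "lw_cat a v s t'" "\<not> lw_recurrent v t'"
        using IH1[OF q(1)] unfolding cutP_def by blast
      have "lw_cat u1 u2 = lw_cat (lw_cat a (lw_sharp v)) (lw_cat b u2)"
        using H(5) by (simp add: lw_cat_assoc)
      then show ?thesis unfolding cutP_def
        using H M2 markov_monoid.cat by blast
    next
      case True
      then have "\<not> u2 q t" using P(2) by (auto simp: lw_cat_def)
      then obtain a v b t' where H: "a \<in> markov_monoid Delta" "v \<in> markov_monoid Delta"
        "b \<in> markov_monoid Delta" "lw_idem v" "u2 = lw_cat (lw_cat a (lw_sharp v)) b"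
        "lw_cat a v q t'" "\<not> lw_recurrent v t'"
        using IH2[OF q(2)] unfolding cutP_def by blast
      have "lw_cat u1 u2 = lw_cat (lw_cat (lw_cat u1 a) (lw_sharp v)) b"
        using H(5) by (simp add: lw_cat_assoc)
      moreover have "lw_cat (lw_cat u1 a) v s t'"
        using True H(6) by (auto simp: lw_cat_def)
      ultimately show ?thesis unfolding cutP_def
        using H M1 markov_monoid.cat by blast
    qed
  qed
  then show ?case using x y M1 M2 by (auto simp: elw_cat_def intro: markov_monoid.cat)
next
  case (iter x)
  obtain u p where x: "x = (u, p)" by (cases x)
  have M: "u \<in> markov_monoid Delta" using iter x by auto
  have I: "lw_idem u" using iter x by (auto simp: elw_idem_def)
  have IH: "\<And>s t. p s t \<Longrightarrow> \<not> u s t \<Longrightarrow> cutP Delta u s" using iter x by auto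
  have MS: "lw_sharp u \<in> markov_monoid Delta" using M I markov_monoid.iter by blast
  have "cutP Delta (lw_sharp u) s" if P: "p s t" "\<not> lw_sharp u s t" for s t
  proof (cases "u s t")
    case False
    then obtain a v b t' where H: "a \<in> markov_monoid Delta" "v \<in> markov_monoid Delta"
      "b \<in> markov_monoid Delta" "lw_idem v" "u = lw_cat (lw_cat a (lw_sharp v)) b"
      "lw_cat a v s t'" "\<not> lw_recurrent v t'"
      using IH[OF P(1)] unfolding cutP_def by blast
    have "lw_sharp u = lw_cat u (lw_sharp u)" using sharp_absorb[OF I] by simp
    also have "\<dots> = lw_cat (lw_cat a (lw_sharp v)) (lw_cat b (lw_sharp u))"
      using H(5) by (simp add: lw_cat_assoc)
    finally show ?thesis unfolding cutP_def
      using H MS markov_monoid.cat by blast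
  next
    case True
    then have nr: "\<not> lw_recurrent u t" using P(2) by (auto simp: lw_sharp_def)
    have "lw_sharp u = lw_cat (lw_cat lw_one (lw_sharp u)) lw_one" by simp
    moreover have "lw_cat lw_one u s t" using True by simp
    ultimately show ?thesis unfolding cutP_def
      using nr M I markov_monoid.one by blast
  qed
  then show ?case using x MS by (auto simp: elw_sharp_def)
qed

theorem proposition5p14:
  fixes Delta :: "'q::finite \<Rightarrow> 'a::finite \<Rightarrow> 'q pmf"
  assumes "\<exists>x \<in> ext_markov_monoid Delta. leak_witness x"
  shows "\<exists>u \<in> markov_monoid Delta. \<exists>v \<in> markov_monoid Delta. \<exists>w \<in> markov_monoid Delta.
           non_simplicity_witness u v w"
proof -
  obtain x where x: "x \<in> ext_markov_monoid Delta" "leak_witness x" using assms by blast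
  obtain r q where rq: "lw_recurrent (fst x) r" "\<not> fst x r q" "snd x r q" "elw_idem x"
    using x(2) unfolding leak_witness_def by blast
  have "cutP Delta (fst x) r" using main[OF x(1)] rq by blast
  then obtain a v b t' where H: "a \<in> markov_monoid Delta" "v \<in> markov_monoid Delta"
      "b \<in> markov_monoid Delta" "lw_idem v" "fst x = lw_cat (lw_cat a (lw_sharp v)) b"
      "lw_cat a v r t'" "\<not> lw_recurrent v t'"
    unfolding cutP_def by blast
  have "lw_idem (fst x)" using rq(4) by (simp add: elw_idem_def)
  then have "non_simplicity_witness a v b"
    unfolding non_simplicity_witness_def using H rq(1) by metis
  then show ?thesis using H by blast
qed

end
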